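(* Let $\kappa_1,\kappa_2>0$ and $a=\sqrt{\kappa_1/\kappa_2}$. For $V>0$, let $\pi^V$ be the unique stationary distribution of the continuous-time Markov chain on $\mathbb{Z}_{\ge0}$ with two transitions: - $x\to x+1$ at rate $\kappa_1V$ (reaction $\emptyset\to X$); - $x\to x-2$ at rate $\frac{\kappa_2}{V}x(x-1)$ (reaction $2X\to\emptyset$). Let $\tilde\pi^V(\tilde w)=\pi^V(V\tilde w)$ for $\tilde w\in\frac1V\mathbb{Z}_{\ge0}$. If $V\to\infty$ along an increasing sequence and $\tilde x^V\in\frac1V\mathbb{Z}_{\ge0}$ with $\tilde x^V\to\tilde x\in(0,\infty)$, then $$\lim_{V\to\infty}\Big[-\tfrac1V\ln\tilde\pi^V(\tilde x^V)\Big]=g(\tilde x),$$ where $$g(\tilde x)=2\sqrt2\,a-2\tilde x\ln a+\tilde x\ln\tilde x-\tilde x(1+\ln2)-\sqrt{\tilde x^2+4a^2}+\tilde x\ln\!\big(\tilde x+\sqrt{\tilde x^2+4a^2}\big).$$ Moreover, $g$ is a Lyapunov function for the deterministic model $\dot x=\kappa_1-2\kappa_2x^2$ on $(0,\infty)$ at its equilibrium $x^*=\sqrt{\kappa_1/(2\kappa_2)}$: - $g''>0$ on $(0,\infty)$; - $g(x^* )=0$ and $g(x)>0$ for $x\neq x^*$; - $g'(x)(\kappa_1-2\kappa_2x^2)\le0$ for all $x>0$, with equality if and only if $x=x^*$.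
   Context: The Markov chain is the stochastic mass-action model of the network $\emptyset\xrightarrow{\kappa_1}X$, $2X\xrightarrow{\kappa_2}\emptyset$, with rate constants scaled as $\kappa_k^V=\kappa_k/V^{|\nu_k|-1}$ ($|\nu_k|$ = number of molecules consumed). *)

theory Defs
  imports "HOL-Analysis.Analysis"
begin

definition qrate :: "real \<Rightarrow> real \<Rightarrow> real \<Rightarrow> nat \<Rightarrow> nat \<Rightarrow> real" where
  "qrate k1 k2 V x y =
     (if y = x + 1 then k1 * V
      else if 2 \<le> x \<and> y = x - 2 then k2 / V * real x * (real x - 1)
      else if y = x then - (k1 * V + k2 / V * real x * (real x - 1))
      else 0)"

definition stationary_dist :: "real \<Rightarrow> real \<Rightarrow> real \<Rightarrow> (nat \<Rightarrow> real) \<Rightarrow> bool" where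
  "stationary_dist k1 k2 V p \<longleftrightarrow>
     (\<forall>x. 0 \<le> p x) \<and> p sums 1 \<and>
     (\<forall>y. (\<lambda>x. p x * qrate k1 k2 V x y) sums 0)"

definition gfun :: "real \<Rightarrow> real \<Rightarrow> real \<Rightarrow> real" where
  "gfun k1 k2 x =
     (let a = sqrt (k1 / k2) in
       2 * sqrt 2 * a - 2 * x * ln a + x * ln x - x * (1 + ln 2)
       - sqrt (x\<^sup>2 + 4 * a\<^sup>2) + x * ln (x + sqrt (x\<^sup>2 + 4 * a\<^sup>2)))"

end

theory Submission
  imports Defs
begin


lemma g_deriv1:
  fixes a x :: real
  assumes a: "a > 0" and x: "x > 0"
  defines "s \<equiv> sqrt (x\<^sup>2 + 4 * a\<^sup>2)"
  shows "((\<lambda>x. 2 * sqrt 2 * a - 2 * x * ln a + x * ln x - x * (1 + ln 2)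
       - sqrt (x\<^sup>2 + 4 * a\<^sup>2) + x * ln (x + sqrt (x\<^sup>2 + 4 * a\<^sup>2)))
     has_real_derivative (ln x + ln (x + s) - 2 * ln a - ln 2)) (at x)"
proof -
  define S where "S = (\<lambda>x::real. sqrt (x\<^sup>2 + 4 * a\<^sup>2))"
  have q: "x\<^sup>2 + 4 * a\<^sup>2 > 0" using a by (simp add: add_nonneg_pos)
  have sp: "s > 0" unfolding s_def using q by simp
  have xs: "x + s > 0" using sp x by simp
  have sq: "(S has_real_derivative (x / s)) (at x)"
  proof -
    have "((\<lambda>x. sqrt (x\<^sup>2 + 4 * a\<^sup>2)) has_real_derivative (inverse (sqrt (x\<^sup>2 + 4 * a\<^sup>2)) / 2 * (2 * x))) (at x)"
      by (rule DERIV_chain2[OF DERIV_real_sqrt]) (use q in \<open>auto intro!: derivative_eq_intros\<close>)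
    then show ?thesis unfolding s_def S_def by (simp add: divide_simps)
  qed
  have Sx: "S x = s" by (simp add: S_def s_def)
  have D: "((\<lambda>x. 2 * sqrt 2 * a - 2 * x * ln a + x * ln x - x * (1 + ln 2)
       - S x + x * ln (x + S x))
     has_real_derivative (0 - 2 * ln a + (ln x + x * (1/x)) - (1 + ln 2)
       - (x / s) + (ln (x + s) + x * ((1 + x / s) / (x + s))))) (at x)"
    apply (intro derivative_eq_intros sq refl)
    using x xs sq by (auto simp: Sx)
  have E: "0 - 2 * ln a + (ln x + x * (1/x)) - (1 + ln 2)
       - (x / s) + (ln (x + s) + x * ((1 + x / s) / (x + s)))
       = ln x + ln (x + s) - 2 * ln a - ln 2"
  proof -
    have "(1 + x / s) / (x + s) = ((s + x) / s) / (x + s)" using sp by (simp add: field_simps)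
    also have "\<dots> = 1 / s" using sp xs by (simp add: add.commute)
    finally have "(1 + x / s) / (x + s) = 1 / s" .
    then show ?thesis using x sp by simp
  qed
  show ?thesis using D unfolding E by (simp add: S_def)
qed

lemma gfun_eq: "gfun k1 k2 = (\<lambda>x. 2 * sqrt 2 * sqrt (k1/k2) - 2 * x * ln (sqrt (k1/k2)) + x * ln x - x * (1 + ln 2)
       - sqrt (x\<^sup>2 + 4 * (sqrt (k1/k2))\<^sup>2) + x * ln (x + sqrt (x\<^sup>2 + 4 * (sqrt (k1/k2))\<^sup>2)))"
  by (simp add: gfun_def Let_def fun_eq_iff)

definition G1 :: "real \<Rightarrow> real \<Rightarrow> real" where
  "G1 a x = ln x + ln (x + sqrt (x\<^sup>2 + 4 * a\<^sup>2)) - 2 * ln a - ln 2"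

lemma G1_deriv:
  fixes a x :: real
  assumes a: "a > 0" and x: "x > 0"
  shows "(G1 a has_real_derivative (1 / x + 1 / sqrt (x\<^sup>2 + 4 * a\<^sup>2))) (at x)"
proof -
  define S where "S = (\<lambda>x::real. sqrt (x\<^sup>2 + 4 * a\<^sup>2))"
  define s where "s = S x"
  have q: "x\<^sup>2 + 4 * a\<^sup>2 > 0" using a by (simp add: add_nonneg_pos)
  have sp: "s > 0" unfolding s_def S_def using q by simp
  have xs: "x + s > 0" using sp x by simp
  have sq: "(S has_real_derivative (x / s)) (at x)"
  proof -
    have "((\<lambda>x. sqrt (x\<^sup>2 + 4 * a\<^sup>2)) has_real_derivative (inverse (sqrt (x\<^sup>2 + 4 * a\<^sup>2)) / 2 * (2 * x))) (at x)"
      by (rule DERIV_chain2[OF DERIV_real_sqrt]) (use q in \<open>auto intro!: derivative_eq_intros\<close>)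
    then show ?thesis unfolding s_def S_def by (simp add: divide_simps)
  qed
  have G: "G1 a = (\<lambda>x. ln x + ln (x + S x) - 2 * ln a - ln 2)" by (simp add: G1_def S_def fun_eq_iff)
  have D: "(G1 a has_real_derivative (1/x + (1 + x/s) / (x + s) - 0 - 0)) (at x)"
    unfolding G
    apply (intro derivative_eq_intros sq refl)
    using x xs sq by (auto simp: s_def)
  have "(1 + x / s) / (x + s) = ((s + x) / s) / (x + s)" using sp by (simp add: field_simps)
  also have "\<dots> = 1 / s" using sp xs by (simp add: add.commute)
  finally have E: "(1 + x / s) / (x + s) = 1 / s" .
  show ?thesis using D unfolding E by (simp add: s_def S_def)
qed

lemma G1_mono:
  fixes a x y :: real
  assumes a: "a > 0" and x: "0 < x" and xy: "x < y"
  shows "G1 a x < G1 a y"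
proof -
  have "sqrt (x\<^sup>2 + 4 * a\<^sup>2) \<le> sqrt (y\<^sup>2 + 4 * a\<^sup>2)"
    using x xy by (intro real_sqrt_le_mono) (simp add: power_mono)
  then have le: "x + sqrt (x\<^sup>2 + 4 * a\<^sup>2) \<le> y + sqrt (y\<^sup>2 + 4 * a\<^sup>2)" using xy by linarith
  have p: "0 < x + sqrt (x\<^sup>2 + 4 * a\<^sup>2)" using x by (simp add: add_pos_nonneg)
  have "ln (x + sqrt (x\<^sup>2 + 4 * a\<^sup>2)) \<le> ln (y + sqrt (y\<^sup>2 + 4 * a\<^sup>2))"
    using le p by (subst ln_le_cancel_iff) auto
  moreover have "ln x < ln y" using x xy by simp
  ultimately show ?thesis unfolding G1_def by simp
qed

lemma G1_star:
  fixes a :: real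
  assumes a: "a > 0"
  shows "G1 a (a / sqrt 2) = 0"
proof -
  have s2: "sqrt 2 * sqrt 2 = (2::real)" by simp
  have "(a / sqrt 2)\<^sup>2 + 4 * a\<^sup>2 = (3 * a / sqrt 2)\<^sup>2"
    by (simp add: power2_eq_square field_simps)
  then have "sqrt ((a / sqrt 2)\<^sup>2 + 4 * a\<^sup>2) = 3 * a / sqrt 2" using a by simp
  then have "a / sqrt 2 + sqrt ((a / sqrt 2)\<^sup>2 + 4 * a\<^sup>2) = 2 * a * sqrt 2"
    by (simp add: field_simps)
  then have "G1 a (a / sqrt 2) = ln (a / sqrt 2) + ln (2 * a * sqrt 2) - 2 * ln a - ln 2"
    by (simp add: G1_def)
  also have "\<dots> = ln ((a / sqrt 2) * (2 * a * sqrt 2)) - ln (a * a) - ln 2"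
    using a by (subst (1 2) ln_mult) auto
  also have "(a / sqrt 2) * (2 * a * sqrt 2) = 2 * (a * a)" by simp
  also have "ln (2 * (a * a)) - ln (a * a) - ln 2 = 0" using a by (simp add: ln_mult)
  finally show ?thesis .
qed

lemma gfun_star:
  fixes k1 k2 :: real
  assumes k1: "k1 > 0" and k2: "k2 > 0"
  shows "gfun k1 k2 (sqrt (k1 / (2 * k2))) = 0"
proof -
  define a where "a = sqrt (k1 / k2)"
  have a: "a > 0" using k1 k2 by (simp add: a_def)
  have xs: "sqrt (k1 / (2 * k2)) = a / sqrt 2" by (simp add: a_def real_sqrt_divide[symmetric])
  define x where "x = a / sqrt 2"
  have xp: "x > 0" using a by (simp add: x_def)
  have "x\<^sup>2 + 4 * a\<^sup>2 = (3 * a / sqrt 2)\<^sup>2"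
    by (simp add: x_def power2_eq_square field_simps)
  then have sx: "sqrt (x\<^sup>2 + 4 * a\<^sup>2) = 3 * a / sqrt 2" using a by simp
  then have xs2: "x + sqrt (x\<^sup>2 + 4 * a\<^sup>2) = 2 * a * sqrt 2"
    by (simp add: field_simps x_def)
  have "G1 a x = 0" using G1_star[OF a] by (simp add: x_def)
  then have G0: "ln x + ln (2 * a * sqrt 2) - 2 * ln a - ln 2 = 0"
    unfolding G1_def xs2 .
  have "gfun k1 k2 x = 2 * sqrt 2 * a - 2 * x * ln a + x * ln x - x * (1 + ln 2)
       - sqrt (x\<^sup>2 + 4 * a\<^sup>2) + x * ln (x + sqrt (x\<^sup>2 + 4 * a\<^sup>2))"
    by (simp add: gfun_def a_def Let_def)
  also have "\<dots> = (2 * sqrt 2 * a - x - 3 * a / sqrt 2) + x * (ln x + ln (2 * a * sqrt 2) - 2 * ln a - ln 2)"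
    unfolding xs2 unfolding sx by (simp add: algebra_simps)
  also have "\<dots> = 0" unfolding G0 
    by (simp add: x_def field_simps)
  finally show ?thesis using xs x_def by simp
qed

lemma gfun_partA:
  fixes k1 k2 :: real
  assumes k1: "k1 > 0" and k2: "k2 > 0"
  shows "(\<forall>x>0. gfun k1 k2 differentiable (at x) \<and> deriv (gfun k1 k2) differentiable (at x)
               \<and> deriv (deriv (gfun k1 k2)) x > 0)
    \<and> gfun k1 k2 (sqrt (k1 / (2 * k2))) = 0
    \<and> (\<forall>x>0. x \<noteq> sqrt (k1 / (2 * k2)) \<longrightarrow> gfun k1 k2 x > 0)
    \<and> (\<forall>x>0. deriv (gfun k1 k2) x * (k1 - 2 * k2 * x\<^sup>2) \<le> 0)
    \<and> (\<forall>x>0. deriv (gfun k1 k2) x * (k1 - 2 * k2 * x\<^sup>2) = 0 \<longleftrightarrow> x = sqrt (k1 / (2 * k2)))"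
proof -
  define a where "a = sqrt (k1 / k2)"
  have a: "a > 0" using k1 k2 by (simp add: a_def)
  have a2: "a\<^sup>2 = k1 / k2" using k1 k2 by (simp add: a_def)
  define xs where "xs = sqrt (k1 / (2 * k2))"
  have xsa: "xs = a / sqrt 2" by (simp add: xs_def a_def real_sqrt_divide[symmetric])
  have xsp: "xs > 0" using a xsa by simp
  have xs2: "xs\<^sup>2 = k1 / (2 * k2)" using k1 k2 by (simp add: xs_def)
  have gd: "(gfun k1 k2 has_real_derivative G1 a x) (at x)" if "x > 0" for x
    using g_deriv1[OF a that] unfolding gfun_eq a_def[symmetric] G1_def by simp
  have dg: "deriv (gfun k1 k2) x = G1 a x" if "x > 0" for x
    using gd[OF that] by (rule DERIV_imp_deriv)
  have dgd: "(deriv (gfun k1 k2) has_real_derivative (1 / x + 1 / sqrt (x\<^sup>2 + 4 * a\<^sup>2))) (at x)"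
    if "x > 0" for x
    by (rule has_field_derivative_transform_within_open[OF G1_deriv[OF a that], of "{0<..}"])
       (use that dg in auto)
  have G1sign: "(G1 a x > 0 \<longleftrightarrow> x > xs) \<and> (G1 a x < 0 \<longleftrightarrow> x < xs)" if "x > 0" for x
    using G1_mono[OF a that, of xs] G1_mono[OF a xsp, of x] G1_star[OF a] that
    unfolding xsa[symmetric] by (cases x xs rule: linorder_cases) auto
  have P1: "\<forall>x>0. gfun k1 k2 differentiable (at x) \<and> deriv (gfun k1 k2) differentiable (at x)
               \<and> deriv (deriv (gfun k1 k2)) x > 0"
  proof (intro allI impI conjI)
    fix x :: real assume x: "x > 0"
    show "gfun k1 k2 differentiable (at x)" using gd[OF x] unfolding real_differentiable_def by blast
    show "deriv (gfun k1 k2) differentiable (at x)" using dgd[OF x] unfolding real_differentiable_def by blast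
    have "deriv (deriv (gfun k1 k2)) x = 1 / x + 1 / sqrt (x\<^sup>2 + 4 * a\<^sup>2)"
      using dgd[OF x] by (rule DERIV_imp_deriv)
    moreover have "sqrt (x\<^sup>2 + 4 * a\<^sup>2) > 0" using a by (simp add: add_nonneg_pos)
    ultimately show "deriv (deriv (gfun k1 k2)) x > 0" using x by (simp add: add_pos_pos)
  qed
  have P3: "\<forall>x>0. x \<noteq> xs \<longrightarrow> gfun k1 k2 x > 0"
  proof (intro allI impI)
    fix x :: real assume x: "x > 0" and ne: "x \<noteq> xs"
    have g0: "gfun k1 k2 xs = 0" using gfun_star[OF k1 k2] by (simp add: xs_def)
    show "gfun k1 k2 x > 0"
    proof (cases "x < xs")
      case True
      obtain z where z: "x < z" "z < xs" "gfun k1 k2 xs - gfun k1 k2 x = (xs - x) * G1 a z"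
        using MVT2[OF True, of "gfun k1 k2" "G1 a"] gd x by force
      have "G1 a z < 0" using G1sign[of z] z x by auto
      then have "(xs - x) * G1 a z < 0" using True by (simp add: mult_pos_neg)
      then show ?thesis using z g0 by linarith
    next
      case False
      then have lt: "xs < x" using ne by simp
      obtain z where z: "xs < z" "z < x" "gfun k1 k2 x - gfun k1 k2 xs = (x - xs) * G1 a z"
        using MVT2[OF lt, of "gfun k1 k2" "G1 a"] gd xsp by force
      have "G1 a z > 0" using G1sign[of z] z xsp by auto
      then show ?thesis using z g0 lt by simp
    qed
  qed
  have kx: "k1 - 2 * k2 * x\<^sup>2 = 2 * k2 * (xs\<^sup>2 - x\<^sup>2)" for x
    using k2 unfolding xs2 by (simp add: field_simps)
  have sgn: "(k1 - 2 * k2 * x\<^sup>2 > 0 \<longleftrightarrow> x < xs) \<and> (k1 - 2 * k2 * x\<^sup>2 < 0 \<longleftrightarrow> x > xs)"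
    if "x > 0" for x
  proof -
    have f: "xs\<^sup>2 - x\<^sup>2 = (xs - x) * (xs + x)" by (simp add: power2_eq_square algebra_simps)
    have p: "xs + x > 0" using that xsp by simp
    have "xs\<^sup>2 - x\<^sup>2 > 0 \<longleftrightarrow> x < xs" unfolding f using p by (simp add: zero_less_mult_iff)
    moreover have "xs\<^sup>2 - x\<^sup>2 < 0 \<longleftrightarrow> x > xs" unfolding f using p by (simp add: mult_less_0_iff)
    ultimately show ?thesis unfolding kx using k2 by (simp add: zero_less_mult_iff mult_less_0_iff)
  qed
  have P4: "\<forall>x>0. deriv (gfun k1 k2) x * (k1 - 2 * k2 * x\<^sup>2) \<le> 0 \<and>
      (deriv (gfun k1 k2) x * (k1 - 2 * k2 * x\<^sup>2) = 0 \<longleftrightarrow> x = xs)"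
  proof (intro allI impI)
    fix x :: real assume x: "x > 0"
    show "deriv (gfun k1 k2) x * (k1 - 2 * k2 * x\<^sup>2) \<le> 0 \<and>
      (deriv (gfun k1 k2) x * (k1 - 2 * k2 * x\<^sup>2) = 0 \<longleftrightarrow> x = xs)"
      unfolding dg[OF x] using G1sign[OF x] sgn[OF x] G1_star[OF a] xsa
      by (cases x xs rule: linorder_cases) (auto simp: mult_le_0_iff)
  qed
  show ?thesis using P1 P3 P4 gfun_star[OF k1 k2] unfolding xs_def by blast
qed



definition recq :: "real \<Rightarrow> (nat \<Rightarrow> real) \<Rightarrow> bool" where
  "recq c p \<longleftrightarrow> (\<forall>y. c * p y = real (y+1) * real y * p (y+1) + real (y+1) * real (y+2) * p (y+2))"

lemma balance:
  fixes p :: "nat \<Rightarrow> real"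
  assumes V: "V > 0" and s: "(\<lambda>x. p x * qrate k1 k2 V x y) sums 0"
  shows "(if y \<ge> 1 then p (y-1) * (k1 * V) else 0) + p (y+2) * (k2 / V * real (y+2) * real (y+1))
         - p y * (k1 * V + k2 / V * real y * (real y - 1)) = 0"
proof (cases y)
  case 0
  have "(\<lambda>x. p x * qrate k1 k2 V x y) sums (\<Sum>x\<in>{0,2}. p x * qrate k1 k2 V x y)"
    by (rule sums_finite) (auto simp: qrate_def 0)
  then have "(\<Sum>x\<in>{0,2}. p x * qrate k1 k2 V x y) = 0" using s sums_unique2 by blast
  then show ?thesis by (simp add: qrate_def 0 algebra_simps numeral_2_eq_2)
next
  case (Suc z)
  have "(\<lambda>x. p x * qrate k1 k2 V x y) sums (\<Sum>x\<in>{z, Suc z, Suc (Suc (Suc z))}. p x * qrate k1 k2 V x y)"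
    by (rule sums_finite) (auto simp: qrate_def Suc)
  then have "(\<Sum>x\<in>{z, Suc z, Suc (Suc (Suc z))}. p x * qrate k1 k2 V x y) = 0" using s sums_unique2 by blast
  moreover have ne: "Suc z \<noteq> z - Suc 0" by arith
  ultimately show ?thesis by (simp add: qrate_def Suc algebra_simps)
qed

lemma lin:
  fixes K D y p0 p1 p2 p3 :: real
  shows "K*p0 = D*(y+1)*y*p1 + D*(y+1)*(y+2)*p2 \<Longrightarrow> p0*K + p3*(D*(y+3)*(y+2)) - p1*(K + D*(y+1)*y) = 0
    \<Longrightarrow> K*p1 = D*(y+2)*(y+1)*p2 + D*(y+2)*(y+3)*p3"
  by algebra

lemma cut_eq:
  fixes p :: "nat \<Rightarrow> real"
  assumes V: "V > 0" and k2: "k2 > 0" and s: "\<And>y. (\<lambda>x. p x * qrate k1 k2 V x y) sums 0"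
  shows "recq (k1 * V\<^sup>2 / k2) p"
proof -
  have c: "k1 * V * p y = k2 / V * real (y+1) * real y * p (y+1) + k2 / V * real (y+1) * real (y+2) * p (y+2)" for y
  proof (induction y)
    case 0
    then show ?case using balance[OF V s, of 0] by (simp add: algebra_simps numeral_2_eq_2)
  next
    case (Suc y)
    have b: "p y * (k1 * V) + p (y+3) * (k2 / V * (real y+3) * (real y+2))
         - p (y+1) * (k1 * V + k2 / V * (real y+1) * real y) = 0"
      using balance[OF V s, of "Suc y"] by (simp add: algebra_simps numeral_3_eq_3)
    have IH: "k1 * V * p y = k2 / V * (real y+1) * real y * p (y+1) + k2 / V * (real y+1) * (real y+2) * p (y+2)"
      using Suc.IH by (simp add: algebra_simps)
    have "k1 * V * p (y+1) = k2 / V * (real y+2) * (real y+1) * p (y+2) + k2 / V * (real y+2) * (real y+3) * p (y+3)"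
      using lin[OF IH b] .
    then show ?case by (simp add: algebra_simps numeral_3_eq_3)
  qed
  show ?thesis unfolding recq_def
  proof
    fix y
    have "k2 / V * (k1 * V\<^sup>2 / k2 * p y) = k1 * V * p y" using V k2 by (simp add: power2_eq_square field_simps)
    also have "\<dots> = k2 / V * (real (y+1) * real y * p (y+1) + real (y+1) * real (y+2) * p (y+2))"
      unfolding c[of y] by (simp only: ring_distribs mult.assoc)
    finally show "k1 * V\<^sup>2 / k2 * p y = real (y+1) * real y * p (y+1) + real (y+1) * real (y+2) * p (y+2)"
      using V k2 by simp
  qed
qed

lemma rec_decay:
  fixes p :: "nat \<Rightarrow> real"
  assumes c: "c \<ge> 0" and r: "recq c p" and nn: "\<And>y. p y \<ge> 0"
  shows "p (y+1) * (fact y * fact (y+1)) \<le> p 1 * c^y"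
proof (induction y)
  case 0
  then show ?case by simp
next
  case (Suc y)
  have e: "c * p (y+1) = real (y+2) * real (y+1) * p (y+2) + real (y+2) * real (y+3) * p (y+3)"
    using r unfolding recq_def by (simp add: numeral_3_eq_3 numeral_2_eq_2 algebra_simps)
  have "real (y+2) * real (y+3) * p (y+3) \<ge> 0" using nn by simp
  then have le: "real (y+2) * real (y+1) * p (y+2) \<le> c * p (y+1)" using e by linarith
  have "p (Suc y + 1) * (fact (Suc y) * fact (Suc y + 1)) = (real (y+2) * real (y+1) * p (y+2)) * (fact y * fact (y+1))"
    by (simp add: algebra_simps numeral_2_eq_2)
  also have "\<dots> \<le> (c * p (y+1)) * (fact y * fact (y+1))"
    by (rule mult_right_mono[OF le]) simp
  also have "\<dots> = c * (p (y+1) * (fact y * fact (y+1)))" by simp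
  also have "\<dots> \<le> c * (p 1 * c^y)" using Suc.IH c by (rule mult_left_mono)
  finally show ?case by (simp add: ac_simps)
qed

lemma wron_step:
  fixes p q :: "nat \<Rightarrow> real"
  assumes rp: "recq c p" and rq: "recq c q"
  shows "(p (y+1) * q (y+2) - p (y+2) * q (y+1)) * (real (y+1) * real (y+2)) = - c * (p y * q (y+1) - p (y+1) * q y)"
proof -
  have a: "c * p y = real (y+1) * real y * p (y+1) + real (y+1) * real (y+2) * p (y+2)"
    using rp unfolding recq_def by blast
  have b: "c * q y = real (y+1) * real y * q (y+1) + real (y+1) * real (y+2) * q (y+2)"
    using rq unfolding recq_def by blast
  show ?thesis using a b by algebra
qed

lemma wron_closed:
  fixes p q :: "nat \<Rightarrow> real"
  assumes rp: "recq c p" and rq: "recq c q"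
  shows "(p y * q (y+1) - p (y+1) * q y) * (fact y * fact (y+1)) = (-c)^y * (p 0 * q 1 - p 1 * q 0)"
proof (induction y)
  case 0 then show ?case by simp
next
  case (Suc y)
  have "(p (Suc y) * q (Suc y+1) - p (Suc y+1) * q (Suc y)) * (fact (Suc y) * fact (Suc y+1))
      = ((p (y+1) * q (y+2) - p (y+2) * q (y+1)) * (real (y+1) * real (y+2))) * (fact y * fact (y+1))"
    by (simp add: algebra_simps numeral_2_eq_2)
  also have "\<dots> = - c * ((p y * q (y+1) - p (y+1) * q y) * (fact y * fact (y+1)))"
    unfolding wron_step[OF rp rq] by simp
  also have "\<dots> = (-c)^(Suc y) * (p 0 * q 1 - p 1 * q 0)" unfolding Suc.IH by simp
  finally show ?case .
qed

lemma rec_unique0: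
  fixes p q :: "nat \<Rightarrow> real"
  assumes c: "c > 0" and rp: "recq c p" and rq: "recq c q"
    and np: "\<And>y. p y \<ge> 0" and nq: "\<And>y. q y \<ge> 0"
  shows "p 0 * q 1 = p 1 * q 0"
proof -
  define W0 where "W0 = p 0 * q 1 - p 1 * q 0"
  define P where "P = p 1"
  define Q where "Q = q 1"
  have P: "P \<ge> 0" "Q \<ge> 0" using np nq by (auto simp: P_def Q_def)
  have dp: "p (y+1) * (fact y * fact (y+1)) \<le> P * c^y" for y
    unfolding P_def using rec_decay[OF _ rp np] c by simp
  have dq: "q (y+1) * (fact y * fact (y+1)) \<le> Q * c^y" for y
    unfolding Q_def using rec_decay[OF _ rq nq] c by simp
  have bound: "\<bar>W0\<bar> \<le> 2 * P * Q * (c^y / fact y)" for y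
  proof -
    have cl: "(p (y+1) * q (y+2) - p (y+2) * q (y+1)) * (fact (y+1) * fact (y+2)) = (-c)^(y+1) * W0"
      using wron_closed[OF rp rq, of "y+1"] by (simp add: W0_def numeral_2_eq_2)
    have "\<bar>W0\<bar> * c^(y+1) = \<bar>(p (y+1) * q (y+2) - p (y+2) * q (y+1))\<bar> * (fact (y+1) * fact (y+2))"
      using arg_cong[OF cl, of abs] c by (simp add: abs_mult power_abs)
    also have "\<dots> \<le> (p (y+1) * q (y+2) + p (y+2) * q (y+1)) * (fact (y+1) * fact (y+2))"
      by (rule mult_right_mono) (use np nq in \<open>auto simp: abs_le_iff\<close>)
    finally have A: "\<bar>W0\<bar> * c^(y+1) \<le> (p (y+1) * q (y+2) + p (y+2) * q (y+1)) * (fact (y+1) * fact (y+2))" .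
    have B1: "(p (y+1) * q (y+2)) * ((fact (y+1) * fact (y+2)) * (fact y * fact (y+1)))
        \<le> (P * c^y) * (Q * c^(y+1))"
    proof -
      have "(p (y+1) * q (y+2)) * ((fact (y+1) * fact (y+2)) * (fact y * fact (y+1)))
          = (p (y+1) * (fact y * fact (y+1))) * (q (y+1+1) * (fact (y+1) * fact (y+1+1)))"
        by (simp add: numeral_2_eq_2 algebra_simps)
      also have "\<dots> \<le> (P * c^y) * (Q * c^(y+1))"
        by (rule mult_mono[OF dp dq]) (use P c np nq in auto)
      finally show ?thesis .
    qed
    have B2: "(p (y+2) * q (y+1)) * ((fact (y+1) * fact (y+2)) * (fact y * fact (y+1)))
        \<le> (P * c^(y+1)) * (Q * c^y)"
    proof -
      have "(p (y+2) * q (y+1)) * ((fact (y+1) * fact (y+2)) * (fact y * fact (y+1)))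
          = (p (y+1+1) * (fact (y+1) * fact (y+1+1))) * (q (y+1) * (fact y * fact (y+1)))"
        by (simp add: numeral_2_eq_2 algebra_simps)
      also have "\<dots> \<le> (P * c^(y+1)) * (Q * c^y)"
        by (rule mult_mono[OF dp dq]) (use P c np nq in auto)
      finally show ?thesis .
    qed
    have F: "fact y * fact (y+1) > (0::real)" by simp
    have "\<bar>W0\<bar> * c^(y+1) * (fact y * fact (y+1)) \<le>
        (p (y+1) * q (y+2) + p (y+2) * q (y+1)) * (fact (y+1) * fact (y+2)) * (fact y * fact (y+1))"
      by (rule mult_right_mono[OF A]) simp
    also have "\<dots> = (p (y+1) * q (y+2)) * ((fact (y+1) * fact (y+2)) * (fact y * fact (y+1)))
        + (p (y+2) * q (y+1)) * ((fact (y+1) * fact (y+2)) * (fact y * fact (y+1)))"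
      by (simp only: distrib_right mult.assoc)
    also have "\<dots> \<le> (P * c^y) * (Q * c^(y+1)) + (P * c^(y+1)) * (Q * c^y)"
      using B1 B2 by (rule add_mono)
    also have "\<dots> = 2 * P * Q * (c^y * c^(y+1))" by (simp only: ac_simps mult_2 distrib_right distrib_left)
    also have "c^y * c^(y+1) = c^(2*y+1)" by (subst power_add[symmetric]) (simp add: mult_2)
    finally have G: "\<bar>W0\<bar> * c^(y+1) * (fact y * fact (y+1)) \<le> 2 * P * Q * c^(2*y+1)" .
    have cc: "c^y * c^(y+1) = c^(2*y+1)" by (subst power_add[symmetric]) (simp add: mult_2)
    have "(2 * P * Q * c^y / (fact y * fact (y+1))) * (c^(y+1) * (fact y * fact (y+1))) = 2 * P * Q * (c^y * c^(y+1))"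
      using F by (simp del: fact_Suc)
    then have eqR: "2 * P * Q * c^(2*y+1) = (2 * P * Q * c^y / (fact y * fact (y+1))) * (c^(y+1) * (fact y * fact (y+1)))"
      unfolding cc[symmetric] by (simp only: mult.assoc)
    from G[unfolded eqR] have "\<bar>W0\<bar> * (c^(y+1) * (fact y * fact (y+1))) \<le> (2 * P * Q * c^y / (fact y * fact (y+1))) * (c^(y+1) * (fact y * fact (y+1)))"
      by (simp only: mult.assoc)
    then have "\<bar>W0\<bar> \<le> 2 * P * Q * c^y / (fact y * fact (y+1))"
      by (rule mult_right_le_imp_le) (use F c in simp)
    also have "\<dots> \<le> 2 * P * Q * c^y / fact y"
    proof (rule divide_left_mono)
      have "1 \<le> (fact (y+1)::real)" by (rule fact_ge_1)
      from mult_left_mono[OF this, of "fact y"]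
      show "fact y \<le> fact y * (fact (y+1) :: real)" by (simp del: fact_Suc)
    qed (use P c in auto)
    finally show ?thesis by simp
  qed
  have lim: "(\<lambda>y. 2 * P * Q * (c^y / fact y)) \<longlonglongrightarrow> 2 * P * Q * 0"
  proof (intro tendsto_mult tendsto_const)
    have "(\<lambda>y. inverse (fact y) * c^y) \<longlonglongrightarrow> 0" by (rule summable_LIMSEQ_zero[OF summable_exp])
    then show "(\<lambda>y. c^y / fact y) \<longlonglongrightarrow> 0" by (simp add: divide_inverse mult.commute)
  qed
  have "\<bar>W0\<bar> \<le> 2 * P * Q * 0"
    by (rule LIMSEQ_le_const[OF lim]) (use bound in auto)
  then show ?thesis unfolding W0_def by simp
qed

lemma rec_prop:
  fixes p q :: "nat \<Rightarrow> real"
  assumes rp: "recq c p" and rq: "recq c q" and w: "p 0 * q 1 = p 1 * q 0"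
  shows "p y * q 0 = p 0 * q y"
proof -
  define d where "d y = p y * q 0 - p 0 * q y" for y
  have rd: "c * d y = real (y+1) * real y * d (y+1) + real (y+1) * real (y+2) * d (y+2)" for y
  proof -
    have a: "c * p y = real (y+1) * real y * p (y+1) + real (y+1) * real (y+2) * p (y+2)"
      using rp unfolding recq_def by blast
    have b: "c * q y = real (y+1) * real y * q (y+1) + real (y+1) * real (y+2) * q (y+2)"
      using rq unfolding recq_def by blast
    show ?thesis unfolding d_def using a b by algebra
  qed
  have "d y = 0 \<and> d (y+1) = 0" for y
  proof (induction y)
    case 0 then show ?case using w by (simp add: d_def mult.commute)
  next
    case (Suc y)
    have "real (y+1) * real (y+2) * d (y+2) = 0" using rd[of y] Suc by simp
    then have "d (y+2) = 0" by simp
    then show ?case using Suc by (simp add: numeral_2_eq_2)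
  qed
  then show ?thesis unfolding d_def by simp
qed



definition tq :: "real \<Rightarrow> nat \<Rightarrow> real" where
  "tq c k = c^k / (fact k * fact (k+1))"

definition qf :: "real \<Rightarrow> nat \<Rightarrow> real" where
  "qf c y = (\<Sum>k. tq c k * real (Suc k choose y))"

lemma exp_sums_real: "(\<lambda>n. x^n / fact n) sums exp (x::real)"
  using exp_converges[of x] by (simp add: divide_inverse scaleR_conv_of_real mult.commute)

lemma tq_nonneg: "c \<ge> 0 \<Longrightarrow> tq c k \<ge> 0"
  by (simp add: tq_def)

lemma tq_le_exp_term:
  assumes b: "b \<ge> 0"
  shows "tq b k \<le> (2 * sqrt b)^(2*k) / fact (2*k)"
proof -
  have f: "fact k * fact k * real (2*k choose k) = fact (2*k)"
  proof -
    have "real (2*k choose k) = fact (2*k) / (fact k * fact (2*k - k))" by (rule binomial_fact) simp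
    then show ?thesis by (simp add: mult_2)
  qed
  have B: "real (2*k choose k) \<le> 4^k"
  proof -
    have "(2*k choose k) \<le> 2^(2*k)" by (rule binomial_le_pow2)
    then have "real (2*k choose k) \<le> 2^(2*k)" by (metis of_nat_le_iff of_nat_numeral of_nat_power)
    then show ?thesis by (simp add: power_mult)
  qed
  have F1: "fact k * fact k \<le> (fact k * fact (k+1) :: real)"
  proof -
    have "1 \<le> (fact (k+1)::real) / fact k" by (simp del: fact_Suc add: fact_Suc)
    then show ?thesis by (simp del: fact_Suc add: fact_Suc algebra_simps)
  qed
  have "tq b k = b^k / (fact k * fact (k+1))" by (simp add: tq_def)
  also have "\<dots> \<le> b^k / (fact k * fact k)"
    by (rule divide_left_mono[OF F1]) (use b in auto)
  also have "\<dots> = 4^k * b^k / (fact k * fact k * 4^k)" by simp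
  also have "\<dots> \<le> 4^k * b^k / (fact k * fact k * real (2*k choose k))"
    by (rule divide_left_mono[OF mult_left_mono[OF B]]) (use b in \<open>auto intro!: mult_pos_pos\<close>)
  also have "\<dots> = (2 * sqrt b)^(2*k) / fact (2*k)"
    unfolding f using b by (simp add: power_mult power_mult_distrib)
  finally show ?thesis .
qed

lemma bessel_bound:
  assumes b: "b \<ge> 0"
  shows "summable (tq b) \<and> suminf (tq b) \<le> exp (2 * sqrt b)"
proof -
  define g where "g j = (2 * sqrt b)^j / fact j" for j
  have gs: "g sums exp (2 * sqrt b)" unfolding g_def by (rule exp_sums_real)
  have gnn: "g j \<ge> 0" for j using b by (simp add: g_def)
  have ps: "(\<Sum>k<N. tq b k) \<le> (\<Sum>j<2*N. g j)" for N
  proof (induction N)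
    case 0 then show ?case by simp
  next
    case (Suc N)
    have "(\<Sum>k<Suc N. tq b k) = (\<Sum>k<N. tq b k) + tq b N" by simp
    also have "\<dots> \<le> (\<Sum>j<2*N. g j) + g (2*N) + g (2*N+1)"
      using Suc tq_le_exp_term[OF b, of N] gnn[of "2*N+1"] by (simp add: g_def)
    also have "\<dots> = (\<Sum>j<2*Suc N. g j)" by simp
    finally show ?case .
  qed
  have pe: "(\<Sum>j<M. g j) \<le> exp (2 * sqrt b)" for M
    using sum_le_suminf[OF sums_summable[OF gs], of "{..<M}"] gnn sums_unique[OF gs] by auto
  have tot: "(\<Sum>k<N. tq b k) \<le> exp (2 * sqrt b)" for N using ps[of N] pe[of "2*N"] by linarith
  have sm: "summable (tq b)"
  proof (rule bounded_imp_summable)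
    show "0 \<le> tq b n" for n using tq_nonneg[OF b] .
    show "(\<Sum>k\<le>n. tq b k) \<le> exp (2 * sqrt b)" for n using tot[of "Suc n"] by (simp add: lessThan_Suc_atMost)
  qed
  show ?thesis by (intro conjI sm suminf_le_const[OF sm tot])
qed

lemma binom_tilt:
  fixes t :: real
  assumes t: "t > 0"
  shows "real (n choose y) * t^y \<le> (1 + t)^n"
proof (cases "y \<le> n")
  case True
  have "(t + 1)^n = (\<Sum>k\<le>n. real (n choose k) * t^k * 1^(n-k))" by (rule binomial_ring)
  also have "\<dots> \<ge> real (n choose y) * t^y * 1^(n-y)"
    by (rule member_le_sum[of y "{..n}" "\<lambda>k. real (n choose k) * t^k * 1^(n-k)"]) (use True t in auto)
  finally show ?thesis by (simp add: add.commute)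
next
  case False
  then show ?thesis using t by (simp add: binomial_eq_0)
qed

lemma tq_scale: "tq c k * a^(k+1) = a * tq (c * a) k"
  by (simp add: tq_def power_mult_distrib)

lemma qf_summable:
  assumes c: "c \<ge> 0"
  shows "summable (\<lambda>k. tq c k * real (Suc k choose y))"
proof (rule summable_comparison_test)
  show "summable (\<lambda>k. 2 * tq (c * 2) k)"
    using bessel_bound[of "c*2"] c by (intro summable_mult) auto
  show "\<exists>N. \<forall>n\<ge>N. norm (tq c n * real (Suc n choose y)) \<le> 2 * tq (c * 2) n"
  proof (intro exI allI impI)
    fix n :: nat
    have "real (Suc n choose y) \<le> real (2^(Suc n))" by (rule of_nat_mono[OF binomial_le_pow2])
    then have "real (Suc n choose y) \<le> 2^(n+1)" by simp
    then have "tq c n * real (Suc n choose y) \<le> tq c n * 2^(n+1)"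
      by (rule mult_left_mono) (rule tq_nonneg[OF c])
    then show "norm (tq c n * real (Suc n choose y)) \<le> 2 * tq (c * 2) n"
      using tq_nonneg[OF c, of n] tq_scale[of c n 2] by simp
  qed
qed

lemma qf_nonneg: "c \<ge> 0 \<Longrightarrow> qf c y \<ge> 0"
  unfolding qf_def by (rule suminf_nonneg[OF qf_summable]) (auto intro!: mult_nonneg_nonneg tq_nonneg)

lemma qf_term_le:
  assumes c: "c \<ge> 0"
  shows "tq c k * real (Suc k choose y) \<le> qf c y"
  unfolding qf_def
  using sum_le_suminf[OF qf_summable[OF c], of "{k}"] tq_nonneg[OF c] by auto

lemma qf_pos:
  assumes c: "c > 0"
  shows "qf c y > 0"
proof -
  have "0 < tq c y * real (Suc y choose y)" using c by (simp add: tq_def)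
  also have "\<dots> \<le> qf c y" using qf_term_le[of c y y] c by simp
  finally show ?thesis .
qed

lemma qf_single:
  assumes c: "c \<ge> 0" and yk: "y \<le> k + 1"
  shows "c^k / (fact k * fact y * fact (k + 1 - y)) \<le> qf c y"
proof -
  have "real (Suc k choose y) = fact (Suc k) / (fact y * fact (Suc k - y))" by (rule binomial_fact) (use yk in simp)
  then have "tq c k * real (Suc k choose y) = c^k / (fact k * fact y * fact (k + 1 - y))"
    by (simp add: tq_def del: fact_Suc)
  then show ?thesis using qf_term_le[OF c, of k y] by simp
qed

lemma qf_tilt:
  assumes c: "c \<ge> 0" and t: "t > 0"
  shows "qf c y * t^y \<le> (1 + t) * exp (2 * sqrt (c * (1 + t)))"
proof -
  have c1: "c * (1 + t) \<ge> 0" using c t by simp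
  have "qf c y * t^y = (\<Sum>k. tq c k * real (Suc k choose y) * t^y)"
    unfolding qf_def by (rule suminf_mult2[OF qf_summable[OF c]])
  also have "\<dots> \<le> (\<Sum>k. (1 + t) * tq (c * (1 + t)) k)"
  proof (rule suminf_le)
    show "summable (\<lambda>k. tq c k * real (Suc k choose y) * t^y)"
      by (rule summable_mult2[OF qf_summable[OF c]])
    show "summable (\<lambda>k. (1 + t) * tq (c * (1 + t)) k)"
      using bessel_bound[OF c1] by (intro summable_mult) auto
    fix k
    have "tq c k * real (Suc k choose y) * t^y = tq c k * (real (Suc k choose y) * t^y)" by simp
    also have "\<dots> \<le> tq c k * (1 + t)^(k+1)"
      by (rule mult_left_mono[OF _ tq_nonneg[OF c]]) (use binom_tilt[OF t, of "Suc k" y] in simp)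
    also have "\<dots> = (1 + t) * tq (c * (1 + t)) k" by (rule tq_scale)
    finally show "tq c k * real (Suc k choose y) * t^y \<le> (1 + t) * tq (c * (1 + t)) k" .
  qed
  also have "\<dots> = (1 + t) * suminf (tq (c * (1 + t)))"
    using bessel_bound[OF c1] by (intro suminf_mult) auto
  also have "\<dots> \<le> (1 + t) * exp (2 * sqrt (c * (1 + t)))"
    using bessel_bound[OF c1] t by (intro mult_left_mono) auto
  finally show ?thesis .
qed

lemma qf_sum_summable:
  assumes c: "c \<ge> 0"
  shows "summable (qf c)"
proof (rule summable_comparison_test)
  show "summable (\<lambda>y. 3 * exp (2 * sqrt (c * 3)) * (1/2)^y)"
    by (intro summable_mult summable_geometric) simp
  show "\<exists>N. \<forall>n\<ge>N. norm (qf c n) \<le> 3 * exp (2 * sqrt (c * 3)) * (1/2)^n"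
  proof (intro exI allI impI)
    fix n :: nat
    have A: "qf c n * 2^n \<le> (1 + 2) * exp (2 * sqrt (c * (1 + 2)))" by (rule qf_tilt[OF c]) simp
    have e: "qf c n = (qf c n * 2^n) * (1/2)^n" by (simp add: power_one_over)
    have "qf c n \<le> ((1 + 2) * exp (2 * sqrt (c * (1 + 2)))) * (1/2)^n"
      by (subst e, rule mult_right_mono[OF A]) simp
    then show "norm (qf c n) \<le> 3 * exp (2 * sqrt (c * 3)) * (1/2)^n"
      using qf_nonneg[OF c, of n] by simp
  qed
qed

lemma binom_partial: "(\<Sum>y<Y. real (n choose y)) \<le> 2^n"
proof -
  have "(\<Sum>y<Y. (n choose y)) \<le> (\<Sum>y<Y+n+1. (n choose y))" by (rule sum_mono2) auto
  also have "(\<Sum>y<Y+n+1. (n choose y)) = (\<Sum>y\<le>n. (n choose y))"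
    by (rule sum.mono_neutral_right) auto
  also have "\<dots> = 2^n" by (rule choose_row_sum)
  finally have "(\<Sum>y<Y. (n choose y)) \<le> 2^n" .
  then have "real (\<Sum>y<Y. (n choose y)) \<le> real (2^n)" by (rule of_nat_mono)
  then show ?thesis by simp
qed

lemma qf_total:
  assumes c: "c \<ge> 0"
  shows "suminf (qf c) \<le> 2 * exp (2 * sqrt (2 * c))"
proof (rule suminf_le_const[OF qf_sum_summable[OF c]])
  fix Y
  have c2: "c * 2 \<ge> 0" using c by simp
  have "(\<Sum>y<Y. qf c y) = (\<Sum>k. \<Sum>y<Y. tq c k * real (Suc k choose y))"
    unfolding qf_def by (rule suminf_sum[symmetric]) (rule qf_summable[OF c])
  also have "\<dots> \<le> (\<Sum>k. 2 * tq (c * 2) k)"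
  proof (rule suminf_le)
    show "summable (\<lambda>k. \<Sum>y<Y. tq c k * real (Suc k choose y))"
      by (rule summable_sum) (rule qf_summable[OF c])
    show "summable (\<lambda>k. 2 * tq (c * 2) k)"
      using bessel_bound[OF c2] by (intro summable_mult) auto
    fix k
    have "(\<Sum>y<Y. tq c k * real (Suc k choose y)) = tq c k * (\<Sum>y<Y. real (Suc k choose y))"
      by (simp add: sum_distrib_left)
    also have "\<dots> \<le> tq c k * 2^(k+1)"
      by (rule mult_left_mono[OF _ tq_nonneg[OF c]]) (use binom_partial[where n="Suc k" and Y=Y] in simp)
    also have "\<dots> = 2 * tq (c * 2) k" by (rule tq_scale)
    finally show "(\<Sum>y<Y. tq c k * real (Suc k choose y)) \<le> 2 * tq (c * 2) k" .
  qed
  also have "\<dots> = 2 * suminf (tq (c * 2))"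
    using bessel_bound[OF c2] by (intro suminf_mult) auto
  also have "\<dots> \<le> 2 * exp (2 * sqrt (2 * c))"
    using bessel_bound[OF c2] by (simp add: mult.commute)
  finally show "(\<Sum>y<Y. qf c y) \<le> 2 * exp (2 * sqrt (2 * c))" .
qed

lemma binom_id:
  "(y+1)*y*(Suc k choose Suc y) + (y+1)*(y+2)*(Suc k choose (y+2)) = k*(k+1)*(k choose y)"
proof -
  have h1: "Suc y * (Suc k choose Suc y) = Suc k * (k choose y)" by (rule Suc_times_binomial)
  have h2: "Suc (Suc y) * (Suc k choose Suc (Suc y)) = Suc k * (k choose Suc y)" by (rule Suc_times_binomial)
  have h3: "Suc y * (k choose Suc y) = (k - y) * (k choose y)"
  proof (cases k)
    case 0 then show ?thesis by (cases y) auto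
  next
    case (Suc k')
    have "Suc y * (k choose Suc y) = Suc k' * (k' choose y)" unfolding Suc by (rule Suc_times_binomial)
    also have "\<dots> = k * ((k - 1) choose y)" using Suc by simp
    also have "\<dots> = (k - y) * (k choose y)" by (rule binomial_absorb_comp[symmetric])
    finally show ?thesis .
  qed
  have h4: "y * (k choose y) + (k - y) * (k choose y) = k * (k choose y)"
  proof (cases "y \<le> k")
    case True
    then have "y + (k - y) = k" by simp
    then show ?thesis by (metis add_mult_distrib)
  next
    case False then show ?thesis by (simp add: binomial_eq_0)
  qed
  have "(y+1)*y*(Suc k choose Suc y) = y * (Suc y * (Suc k choose Suc y))" by (simp only: Suc_eq_plus1 ac_simps)
  also have "\<dots> = Suc k * (y * (k choose y))" unfolding h1 by (simp only: ac_simps)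
  finally have e1: "(y+1)*y*(Suc k choose Suc y) = Suc k * (y * (k choose y))" .
  have y2: "y+2 = Suc (Suc y)" by simp
  have "(y+1)*(y+2)*(Suc k choose (y+2)) = Suc y * (Suc (Suc y) * (Suc k choose Suc (Suc y)))"
    unfolding y2 by (simp only: Suc_eq_plus1 ac_simps)
  also have "\<dots> = Suc k * (Suc y * (k choose Suc y))" unfolding h2 by (simp only: ac_simps)
  also have "\<dots> = Suc k * ((k - y) * (k choose y))" unfolding h3 ..
  finally have e2: "(y+1)*(y+2)*(Suc k choose (y+2)) = Suc k * ((k - y) * (k choose y))" .
  have "(y+1)*y*(Suc k choose Suc y) + (y+1)*(y+2)*(Suc k choose (y+2))
      = Suc k * (y * (k choose y) + (k - y) * (k choose y))" unfolding e1 e2 by (simp only: add_mult_distrib2)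
  also have "\<dots> = Suc k * (k * (k choose y))" unfolding h4 ..
  finally show ?thesis by (simp only: Suc_eq_plus1 ac_simps)
qed

lemma tq_shift: "c * tq c k = real (k+1) * real (k+2) * tq c (k+1)"
proof -
  define A :: real where "A = fact k"
  have A: "A > 0" by (simp add: A_def)
  have f1: "fact (k+1) = real (k+1) * A" by (simp add: A_def)
  have f2: "fact (k+2) = real (k+2) * (real (k+1) * A)"
    by (simp add: A_def numeral_2_eq_2 del: of_nat_Suc)
  show ?thesis unfolding tq_def f1 f2 using A
    by (simp add: field_simps del: of_nat_Suc)
qed

lemma qf_rec:
  assumes c: "c \<ge> 0"
  shows "recq c (qf c)"
  unfolding recq_def
proof
  fix y
  define f where "f n = real n * real (n+1) * tq c n * real (n choose y)" for n
  have fS: "f (Suc k) = c * (tq c k * real (Suc k choose y))" for k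
  proof -
    have "f (Suc k) = (real (k+1) * real (k+2) * tq c (k+1)) * real (Suc k choose y)"
      unfolding f_def by (simp del: of_nat_Suc add: numeral_2_eq_2)
    also have "\<dots> = c * (tq c k * real (Suc k choose y))" unfolding tq_shift[symmetric] by simp
    finally show ?thesis .
  qed
  have sS: "summable (\<lambda>k. f (Suc k))" unfolding fS by (intro summable_mult qf_summable[OF c])
  then have sf: "summable f" by (simp add: summable_Suc_iff)
  have L: "c * qf c y = suminf f"
  proof -
    have "c * qf c y = (\<Sum>k. f (Suc k))" unfolding fS qf_def by (rule suminf_mult[symmetric, OF qf_summable[OF c]])
    also have "\<dots> = suminf f - f 0" by (rule suminf_split_head[OF sf])
    finally show ?thesis by (simp add: f_def)
  qed
  have T: "tq c k * real (Suc k choose Suc y) * (real (y+1) * real y)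
      + tq c k * real (Suc k choose (y+2)) * (real (y+1) * real (y+2)) = f k" for k
  proof -
    have "real ((y+1)*y*(Suc k choose Suc y) + (y+1)*(y+2)*(Suc k choose (y+2))) = real (k*(k+1)*(k choose y))"
      using binom_id by presburger
    then have "real (y+1) * real y * real (Suc k choose Suc y) + real (y+1) * real (y+2) * real (Suc k choose (y+2))
       = real k * real (k+1) * real (k choose y)" by (simp only: of_nat_add of_nat_mult)
    then have E: "real (y+1) * real y * real (Suc k choose Suc y) + real (y+1) * real (y+2) * real (Suc k choose (y+2))
       = real k * real (k+1) * real (k choose y)" .
    have "tq c k * real (Suc k choose Suc y) * (real (y+1) * real y)
      + tq c k * real (Suc k choose (y+2)) * (real (y+1) * real (y+2))
      = tq c k * (real (y+1) * real y * real (Suc k choose Suc y) + real (y+1) * real (y+2) * real (Suc k choose (y+2)))"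
      by (simp only: distrib_left ac_simps)
    also have "\<dots> = tq c k * (real k * real (k+1) * real (k choose y))" unfolding E ..
    also have "\<dots> = f k" unfolding f_def by (simp only: ac_simps)
    finally show ?thesis .
  qed
  have "real (y+1) * real y * qf c (y+1) + real (y+1) * real (y+2) * qf c (y+2)
      = (\<Sum>k. tq c k * real (Suc k choose Suc y)) * (real (y+1) * real y)
      + (\<Sum>k. tq c k * real (Suc k choose (y+2))) * (real (y+1) * real (y+2))"
    unfolding qf_def by simp
  also have "\<dots> = (\<Sum>k. tq c k * real (Suc k choose Suc y) * (real (y+1) * real y))
      + (\<Sum>k. tq c k * real (Suc k choose (y+2)) * (real (y+1) * real (y+2)))"
    by (simp only: suminf_mult2[OF qf_summable[OF c]])
  also have "\<dots> = (\<Sum>k. tq c k * real (Suc k choose Suc y) * (real (y+1) * real y)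
      + tq c k * real (Suc k choose (y+2)) * (real (y+1) * real (y+2)))"
    by (rule suminf_add) (intro summable_mult2 qf_summable[OF c])+
  also have "\<dots> = suminf f" unfolding T ..
  finally show "c * qf c y = real (y+1) * real y * qf c (y+1) + real (y+1) * real (y+2) * qf c (y+2)"
    using L by simp
qed



lemma ln_fact_le: "ln (fact n :: real) \<le> real (n+1) * ln (real (n+1)) - real n"
proof (induction n)
  case 0 then show ?case by simp
next
  case (Suc n)
  have p1: "real n + 1 > 0" by simp
  have key: "1 / (real n + 2) \<le> ln (real n + 2) - ln (real n + 1)"
  proof -
    have "ln ((real n + 1) / (real n + 2)) \<le> (real n + 1) / (real n + 2) - 1"
      by (rule ln_le_minus_one) simp
    also have "\<dots> = - (1 / (real n + 2))" by (simp add: field_simps)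
    finally show ?thesis by (simp add: ln_div)
  qed
  have "ln (fact (Suc n) :: real) = ln (real n + 1) + ln (fact n)"
    by (simp add: ln_mult add.commute)
  also have "\<dots> \<le> ln (real n + 1) + (real n + 1) * ln (real n + 1) - real n"
    using Suc.IH by (simp add: ac_simps)
  also have "\<dots> = (real n + 2) * ln (real n + 1) - real n" by (simp add: algebra_simps)
  also have "\<dots> \<le> (real n + 2) * ln (real n + 2) - 1 - real n"
  proof -
    have "(real n + 2) * (1 / (real n + 2)) \<le> (real n + 2) * (ln (real n + 2) - ln (real n + 1))"
      by (rule mult_left_mono[OF key]) simp
    then show ?thesis by (simp add: algebra_simps)
  qed
  finally show ?case by (simp add: algebra_simps)
qed

lemma floor_ratio:
  fixes V :: "nat \<Rightarrow> real"
  assumes r: "r \<ge> 0" and Vp: "\<And>n. V n > 0" and Vlim: "filterlim V at_top sequentially"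
  shows "(\<lambda>n. real (nat \<lfloor>r * V n\<rfloor>) / V n) \<longlonglongrightarrow> r"
proof (rule tendsto_sandwich[where f="\<lambda>n. r - 1 / V n" and h="\<lambda>n. r"])
  have iv: "(\<lambda>n. 1 / V n) \<longlonglongrightarrow> 0"
    using tendsto_inverse_0_at_top[OF Vlim] by (simp add: divide_inverse)
  show "(\<lambda>n. r - 1 / V n) \<longlonglongrightarrow> r" using tendsto_diff[OF tendsto_const iv] by simp
  show "(\<lambda>n. r) \<longlonglongrightarrow> r" by simp
  show "\<forall>\<^sub>F n in sequentially. r - 1 / V n \<le> real (nat \<lfloor>r * V n\<rfloor>) / V n"
  proof (intro always_eventually allI)
    fix n
    have nn: "r * V n \<ge> 0" using r Vp[of n] by simp
    have "real (nat \<lfloor>r * V n\<rfloor>) = of_int \<lfloor>r * V n\<rfloor>" using nn by simp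
    then have "r * V n - 1 \<le> real (nat \<lfloor>r * V n\<rfloor>)" by linarith
    then have "(r * V n - 1) / V n \<le> real (nat \<lfloor>r * V n\<rfloor>) / V n"
      using Vp[of n] by (intro divide_right_mono) auto
    moreover have "(r * V n - 1) / V n = r - 1 / V n" using Vp[of n] by (simp add: field_simps)
    ultimately show "r - 1 / V n \<le> real (nat \<lfloor>r * V n\<rfloor>) / V n" by simp
  qed
  show "\<forall>\<^sub>F n in sequentially. real (nat \<lfloor>r * V n\<rfloor>) / V n \<le> r"
  proof (intro always_eventually allI)
    fix n
    have nn: "r * V n \<ge> 0" using r Vp[of n] by simp
    have "real (nat \<lfloor>r * V n\<rfloor>) = of_int \<lfloor>r * V n\<rfloor>" using nn by simp
    then have "real (nat \<lfloor>r * V n\<rfloor>) \<le> r * V n" by linarith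
    then show "real (nat \<lfloor>r * V n\<rfloor>) / V n \<le> r"
      using Vp[of n] by (simp add: field_simps)
  qed
qed

definition Fr :: "real \<Rightarrow> real \<Rightarrow> real" where
  "Fr a x = x * ln (((sqrt (x\<^sup>2 + 4 * a\<^sup>2) - x) / 2) / x) + x + sqrt (x\<^sup>2 + 4 * a\<^sup>2)"

lemma alg_id:
  fixes V K Y J J1 la lV lc lK lY lJ :: real
  assumes V: "V > 0" and lc: "lc = 2*la + 2*lV" and J: "J = K + 1 - Y" and J1: "J1 = K + 2 - Y"
  shows "(K*lc - ((K+1)*lK - K) - ((Y+1)*lY - Y) - (J1*lJ - J))/V
    = 2*(K/V)*la - (K+1)/V*(lK - lV) - (Y+1)/V*(lY - lV) - J1/V*(lJ - lV) + (K+Y+J)/V - 4*(lV/V)"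
proof -
  have "K*lc - ((K+1)*lK - K) - ((Y+1)*lY - Y) - (J1*lJ - J)
    = 2*K*la - (K+1)*(lK - lV) - (Y+1)*(lY - lV) - J1*(lJ - lV) + (K+Y+J) - 4*lV"
    unfolding lc J J1 by (simp add: algebra_simps)
  then show ?thesis using V by (simp add: divide_simps)
qed

lemma LB:
  fixes V :: "nat \<Rightarrow> real" and y :: "nat \<Rightarrow> nat" and a x :: real
  assumes a: "a > 0" and Vp: "\<And>n. V n > 0" and Vlim: "filterlim V at_top sequentially"
    and ylim: "(\<lambda>n. real (y n) / V n) \<longlonglongrightarrow> x" and x: "x > 0"
  shows "\<exists>E. (\<forall>\<^sub>F n in sequentially. E n \<le> ln (qf (a\<^sup>2 * (V n)\<^sup>2) (y n)))
             \<and> (\<lambda>n. E n / V n) \<longlonglongrightarrow> Fr a x"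
proof -
  define s where "s = sqrt (x\<^sup>2 + 4 * a\<^sup>2)"
  define u where "u = (x + s) / 2"
  define w where "w = (s - x) / 2"
  have s2: "s\<^sup>2 = x\<^sup>2 + 4 * a\<^sup>2" unfolding s_def by (simp add: add_nonneg_nonneg)
  have sp: "s > 0" unfolding s_def using a by (simp add: add_nonneg_pos)
  have sx: "s > x"
  proof -
    have "x\<^sup>2 < s\<^sup>2" using s2 a by simp
    then show ?thesis using sp x by (smt (verit) power_mono)
  qed
  have wp: "w > 0" and up: "u > 0" using sx x by (auto simp: w_def u_def)
  have uw: "u - w = x" by (simp add: u_def w_def field_simps)
  have uw2: "u * w = a\<^sup>2"
  proof -
    have "u * w = (s\<^sup>2 - x\<^sup>2) / 4" by (simp add: u_def w_def power2_eq_square algebra_simps)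
    then show ?thesis using s2 by simp
  qed
  define k where "k n = nat \<lfloor>u * V n\<rfloor>" for n
  have kl: "(\<lambda>n. real (k n) / V n) \<longlonglongrightarrow> u" unfolding k_def
    by (rule floor_ratio) (use up Vp Vlim in auto)
  have iv: "(\<lambda>n. 1 / V n) \<longlonglongrightarrow> 0"
    using tendsto_inverse_0_at_top[OF Vlim] by (simp add: divide_inverse)
  have lnV: "(\<lambda>n. ln (V n) / V n) \<longlonglongrightarrow> 0"
    by (rule filterlim_compose[OF ln_x_over_x_tendsto_0 Vlim])
  have evk: "\<forall>\<^sub>F n in sequentially. y n \<le> k n + 1"
  proof -
    have "(\<lambda>n. real (k n) / V n - real (y n) / V n) \<longlonglongrightarrow> u - x"
      by (intro tendsto_diff kl ylim)
    moreover have "u - x > 0" using uw wp by simp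
    ultimately have "\<forall>\<^sub>F n in sequentially. 0 < real (k n) / V n - real (y n) / V n"
      by (rule order_tendstoD(1))
    then show ?thesis
    proof (rule eventually_mono)
      fix n assume "0 < real (k n) / V n - real (y n) / V n"
      then have "real (y n) / V n < real (k n) / V n" by simp
      then have "real (y n) < real (k n)" using Vp[of n] by (simp add: divide_strict_right_mono_neg divide_less_cancel)
      then show "y n \<le> k n + 1" by simp
    qed
  qed
  define c where "c n = a\<^sup>2 * (V n)\<^sup>2" for n
  have cp: "c n > 0" for n using a Vp[of n] by (simp add: c_def)
  have lc: "ln (c n) = 2 * ln a + 2 * ln (V n)" for n
    using a Vp[of n] by (simp add: c_def ln_mult ln_realpow)
  define E where "E n = real (k n) * ln (c n) - (real (k n + 1) * ln (real (k n + 1)) - real (k n))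
      - (real (y n + 1) * ln (real (y n + 1)) - real (y n))
      - (real (k n + 1 - y n + 1) * ln (real (k n + 1 - y n + 1)) - real (k n + 1 - y n))" for n
  have ev1: "\<forall>\<^sub>F n in sequentially. E n \<le> ln (qf (c n) (y n))"
    using evk
  proof (rule eventually_mono)
    fix n assume yk: "y n \<le> k n + 1"
    define K where "K = k n"
    define Y where "Y = y n"
    define J where "J = K + 1 - Y"
    have T: "c n ^ K / (fact K * fact Y * fact J) \<le> qf (c n) Y"
      unfolding J_def by (rule qf_single) (use cp yk in \<open>auto simp: K_def Y_def less_imp_le\<close>)
    have Tp: "c n ^ K / (fact K * fact Y * fact J) > 0" using cp by simp
    have "ln (c n ^ K / (fact K * fact Y * fact J)) = real K * ln (c n) - ln (fact K) - ln (fact Y) - ln (fact J)"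
    proof -
      have f: "fact K * fact Y * fact J > (0::real)" by simp
      have "ln (c n ^ K / (fact K * fact Y * fact J)) = ln (c n ^ K) - ln (fact K * fact Y * fact J)"
        using cp[of n] f by (intro ln_divide_pos) auto
      also have "ln (fact K * fact Y * fact J) = ln (fact K) + ln (fact Y) + ln (fact J :: real)"
        by (simp add: ln_mult)
      also have "ln (c n ^ K) = real K * ln (c n)" using cp[of n] by (simp add: ln_realpow)
      finally show ?thesis by simp
    qed
    also have "\<dots> \<ge> E n"
      using ln_fact_le[of K] ln_fact_le[of Y] ln_fact_le[of J]
      unfolding E_def K_def Y_def J_def by linarith
    finally have "E n \<le> ln (c n ^ K / (fact K * fact Y * fact J))" .
    also have "\<dots> \<le> ln (qf (c n) Y)" using T Tp by simp
    finally show "E n \<le> ln (qf (c n) (y n))" by (simp add: Y_def)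
  qed
  define G where "G n = 2 * (real (k n) / V n) * ln a
      - (real (k n) + 1) / V n * ln ((real (k n) + 1) / V n)
      - (real (y n) + 1) / V n * ln ((real (y n) + 1) / V n)
      - (real (k n) + 2 - real (y n)) / V n * ln ((real (k n) + 2 - real (y n)) / V n)
      + (real (k n) + real (y n) + (real (k n) + 1 - real (y n))) / V n - 4 * (ln (V n) / V n)" for n
  have ev2: "\<forall>\<^sub>F n in sequentially. E n / V n = G n"
    using evk
  proof (rule eventually_mono)
    fix n assume yk: "y n \<le> k n + 1"
    have Vn: "V n > 0" using Vp by simp
    have J: "real (k n + 1 - y n) = real (k n) + 1 - real (y n)" using yk by (simp add: of_nat_diff)
    have J1: "real (k n + 1 - y n + 1) = real (k n) + 2 - real (y n)" using J by simp
    have pos1: "real (k n) + 1 > 0" by simp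
    have pos2: "real (y n) + 1 > 0" by simp
    have pos3: "real (k n) + 2 - real (y n) > 0" using yk by linarith
    have l1: "ln ((real (k n) + 1) / V n) = ln (real (k n) + 1) - ln (V n)" using pos1 Vn by (simp add: ln_div)
    have l2: "ln ((real (y n) + 1) / V n) = ln (real (y n) + 1) - ln (V n)" using pos2 Vn by (simp add: ln_div)
    have l3: "ln ((real (k n) + 2 - real (y n)) / V n) = ln (real (k n) + 2 - real (y n)) - ln (V n)"
      using pos3 Vn by (simp add: ln_div)
    have "E n / V n = (real (k n) * ln (c n) - ((real (k n) + 1) * ln (real (k n) + 1) - real (k n))
      - ((real (y n) + 1) * ln (real (y n) + 1) - real (y n))
      - ((real (k n) + 2 - real (y n)) * ln (real (k n) + 2 - real (y n)) - (real (k n) + 1 - real (y n)))) / V n"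
      unfolding E_def J1 J unfolding of_nat_add of_nat_1 ..
    also have "\<dots> = G n"
      unfolding G_def l1 l2 l3
      by (rule alg_id[OF Vn lc refl refl])
    finally show "E n / V n = G n" .
  qed
  have Gl: "G \<longlonglongrightarrow> 2 * u * ln a - u * ln u - x * ln x - w * ln w + (u + x + (u - x)) - 4 * 0"
  proof -
    have r1: "(\<lambda>n. (real (k n) + 1) / V n) \<longlonglongrightarrow> u"
      using tendsto_add[OF kl iv] by (simp add: add_divide_distrib)
    have r2: "(\<lambda>n. (real (y n) + 1) / V n) \<longlonglongrightarrow> x"
      using tendsto_add[OF ylim iv] by (simp add: add_divide_distrib)
    have r3: "(\<lambda>n. (real (k n) + 2 - real (y n)) / V n) \<longlonglongrightarrow> w"
    proof -
      have "(\<lambda>n. real (k n) / V n + 2 * (1 / V n) - real (y n) / V n) \<longlonglongrightarrow> u + 2 * 0 - x"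
        by (intro tendsto_intros kl iv ylim)
      moreover have "u - x = w" using uw by simp
      ultimately show ?thesis by (simp add: add_divide_distrib diff_divide_distrib)
    qed
    have r4: "(\<lambda>n. (real (k n) + real (y n) + (real (k n) + 1 - real (y n))) / V n) \<longlonglongrightarrow> u + x + (u - x)"
    proof -
      have "(\<lambda>n. real (k n) / V n + real (y n) / V n + (real (k n) / V n + 1 / V n - real (y n) / V n)) \<longlonglongrightarrow> u + x + (u + 0 - x)"
        by (intro tendsto_intros kl iv ylim)
      then show ?thesis by (simp add: add_divide_distrib diff_divide_distrib)
    qed
    show ?thesis unfolding G_def
      by (intro tendsto_intros kl r1 r2 r3 r4 lnV) (use up x wp in auto)
  qed
  have Fv: "2 * u * ln a - u * ln u - x * ln x - w * ln w + (u + x + (u - x)) - 4 * 0 = Fr a x"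
  proof -
    have l1: "ln (a\<^sup>2) = 2 * ln a" using a by (simp add: ln_realpow)
    have l2: "ln (u * w) = ln u + ln w" using up wp by (simp add: ln_mult)
    have la: "2 * ln a = ln u + ln w" using l1 l2 uw2 by simp
    have "2 * u * ln a - u * ln u - w * ln w = u * (2 * ln a) - u * ln u - w * ln w" by simp
    also have "\<dots> = u * (ln u + ln w) - u * ln u - w * ln w" unfolding la ..
    also have "\<dots> = (u - w) * ln w" by (simp add: algebra_simps)
    finally have "2 * u * ln a - u * ln u - w * ln w = (u - w) * ln w" .
    then have "2 * u * ln a - u * ln u - x * ln x - w * ln w = x * (ln w - ln x)" using uw by (simp add: algebra_simps)
    also have "\<dots> = x * ln (w / x)" using wp x by (simp add: ln_div)
    finally have A: "2 * u * ln a - u * ln u - x * ln x - w * ln w = x * ln (w / x)" .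
    have B: "u + x + (u - x) = x + s" by (simp add: u_def field_simps)
    show ?thesis unfolding Fr_def s_def[symmetric] w_def[symmetric] using A B by simp
  qed
  have "(\<lambda>n. E n / V n) \<longlonglongrightarrow> Fr a x"
    using Gl unfolding Fv by (rule Lim_transform_eventually) (use ev2 in \<open>auto elim: eventually_mono\<close>)
  then show ?thesis using ev1 unfolding c_def by blast
qed



lemma gfun_Fr:
  fixes k1 k2 x :: real
  assumes k1: "k1 > 0" and k2: "k2 > 0" and x: "x > 0"
  shows "gfun k1 k2 x = 2 * sqrt 2 * sqrt (k1/k2) - Fr (sqrt (k1/k2)) x"
proof -
  define a where "a = sqrt (k1/k2)"
  have a: "a > 0" using k1 k2 by (simp add: a_def)
  define s where "s = sqrt (x\<^sup>2 + 4 * a\<^sup>2)"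
  define w where "w = (s - x) / 2"
  have s2: "s\<^sup>2 = x\<^sup>2 + 4 * a\<^sup>2" unfolding s_def by (simp add: add_nonneg_nonneg)
  have sp: "s > 0" unfolding s_def using a by (simp add: add_nonneg_pos)
  have sx: "s > x"
  proof -
    have "x\<^sup>2 < s\<^sup>2" using s2 a by simp
    then show ?thesis using sp x by (smt (verit) power_mono)
  qed
  have wp: "w > 0" using sx by (simp add: w_def)
  have xs: "x + s > 0" using x sp by simp
  have prod: "w * (x + s) = 2 * a\<^sup>2"
  proof -
    have "w * (x + s) = (s\<^sup>2 - x\<^sup>2) / 2" by (simp add: w_def power2_eq_square algebra_simps)
    then show ?thesis using s2 by simp
  qed
  have "ln w + ln (x + s) = ln 2 + 2 * ln a"
  proof -
    have "ln w + ln (x + s) = ln (w * (x + s))" using wp xs by (simp add: ln_mult)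
    also have "\<dots> = ln (2 * a\<^sup>2)" unfolding prod ..
    also have "\<dots> = ln 2 + 2 * ln a" using a by (simp add: ln_mult ln_realpow)
    finally show ?thesis .
  qed
  moreover have "ln (w / x) = ln w - ln x" using wp x by (simp add: ln_divide_pos)
  ultimately have "x * ln (w / x) = x * (ln 2 + 2 * ln a - ln (x + s) - ln x)" by simp
  then show ?thesis
    unfolding gfun_def Let_def Fr_def a_def[symmetric] s_def[symmetric] w_def[symmetric]
    by (simp add: algebra_simps)
qed

lemma theta_id:
  fixes a x :: real
  assumes a: "a > 0" and x: "x > 0"
  defines "s \<equiv> sqrt (x\<^sup>2 + 4 * a\<^sup>2)"
  defines "w \<equiv> (s - x) / 2"
  shows "w > 0" "2 * a * sqrt (1 + x / w) = x + s" "x * ln (x / w) = - (x * ln (w / x))"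
proof -
  have s2: "s\<^sup>2 = x\<^sup>2 + 4 * a\<^sup>2" unfolding s_def by (simp add: add_nonneg_nonneg)
  have sp: "s > 0" unfolding s_def using a by (simp add: add_nonneg_pos)
  have sx: "s > x"
  proof -
    have "x\<^sup>2 < s\<^sup>2" using s2 a by simp
    then show ?thesis using sp x by (smt (verit) power_mono)
  qed
  show wp: "w > 0" using sx by (simp add: w_def)
  define u where "u = (x + s) / 2"
  have up: "u > 0" using x sp by (simp add: u_def)
  have uw2: "u * w = a\<^sup>2"
  proof -
    have "u * w = (s\<^sup>2 - x\<^sup>2) / 4" by (simp add: u_def w_def power2_eq_square algebra_simps)
    then show ?thesis using s2 by simp
  qed
  have "1 + x / w = u / w" using wp by (simp add: u_def w_def field_simps)
  then have "a\<^sup>2 * (1 + x / w) = u\<^sup>2" using uw2 wp by (simp add: power2_eq_square field_simps)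
  then have "sqrt (a\<^sup>2 * (1 + x / w)) = u" using up by simp
  then have "a * sqrt (1 + x / w) = u" using a by (simp add: real_sqrt_mult)
  then show "2 * a * sqrt (1 + x / w) = x + s" by (simp add: u_def)
  show "x * ln (x / w) = - (x * ln (w / x))" using wp x by (simp add: ln_divide_pos algebra_simps)
qed

lemma per_V:
  fixes k1 k2 V t :: real and p :: "nat \<Rightarrow> real"
  assumes k1: "k1 > 0" and k2: "k2 > 0" and V: "V > 0" and st: "stationary_dist k1 k2 V p" and t: "t > 0"
  shows "- (1 / V) * ln (p m) \<le> (ln 2 + 2 * sqrt 2 * sqrt (k1/k2) * V - ln (qf ((sqrt (k1/k2))\<^sup>2 * V\<^sup>2) m)) / V"
    and "(ln (qf ((sqrt (k1/k2))\<^sup>2 * V\<^sup>2) m') - ln (1 + t) - 2 * sqrt (k1/k2) * V * sqrt (1 + t) + real m * ln t) / V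
         \<le> - (1 / V) * ln (p m)"
proof -
  define a where "a = sqrt (k1/k2)"
  have a: "a > 0" using k1 k2 by (simp add: a_def)
  define c where "c = a\<^sup>2 * V\<^sup>2"
  have cp: "c > 0" using a V by (simp add: c_def)
  have cc: "k1 * V\<^sup>2 / k2 = c" using k1 k2 by (simp add: c_def a_def)
  have nn: "\<And>x. 0 \<le> p x" and s1: "p sums 1" and bal: "\<And>y. (\<lambda>x. p x * qrate k1 k2 V x y) sums 0"
    using st unfolding stationary_dist_def by auto
  have rp: "recq c p" using cut_eq[OF V k2 bal] unfolding cc .
  define q where "q = qf c"
  have rq: "recq c q" unfolding q_def by (rule qf_rec) (use cp in simp)
  have qp: "q y > 0" for y unfolding q_def by (rule qf_pos[OF cp])
  have qn: "q y \<ge> 0" for y using qp[of y] by simp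
  have w: "p 0 * q 1 = p 1 * q 0" by (rule rec_unique0[OF cp rp rq nn qn])
  have pq: "p y * q 0 = p 0 * q y" for y by (rule rec_prop[OF rp rq w])
  define L where "L = p 0 / q 0"
  have pL: "p y = L * q y" for y using pq[of y] qp[of 0] by (simp add: L_def field_simps)
  define S where "S = suminf q"
  have sq: "summable q" unfolding q_def by (rule qf_sum_summable) (use cp in simp)
  have "(\<lambda>y. L * q y) sums (L * S)" unfolding S_def by (rule sums_mult[OF summable_sums[OF sq]])
  moreover have "(\<lambda>y. L * q y) sums 1"
  proof -
    have "p = (\<lambda>y. L * q y)" by (rule ext) (rule pL)
    then show ?thesis using s1 by simp
  qed
  ultimately have LS: "L * S = 1" using sums_unique2 by blast
  have Sq: "q y \<le> S" for y
    using sum_le_suminf[OF sq, of "{y}"] qn unfolding S_def by auto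
  have Sp: "S > 0" using Sq[of 0] qp[of 0] by simp
  have pm: "p m = q m / S" using pL[of m] LS Sp by (simp add: field_simps)
  have lpm: "ln (p m) = ln (q m) - ln S" unfolding pm using qp[of m] Sp by (rule ln_divide_pos)
  have A: "- (1 / V) * ln (p m) = (ln S - ln (q m)) / V" unfolding lpm by (simp add: diff_divide_distrib)
  have sc: "sqrt (2 * c) = sqrt 2 * a * V" using a V by (simp add: c_def real_sqrt_mult)
  have sc2: "sqrt (c * (1 + t)) = a * V * sqrt (1 + t)" using a V t by (simp add: c_def real_sqrt_mult)
  have "S \<le> 2 * exp (2 * sqrt (2 * c))" unfolding S_def q_def by (rule qf_total) (use cp in simp)
  then have "ln S \<le> ln (2 * exp (2 * sqrt (2 * c)))" using Sp by simp
  also have "\<dots> = ln 2 + 2 * sqrt 2 * a * V" unfolding sc by (simp add: ln_mult)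
  finally have lS: "ln S \<le> ln 2 + 2 * sqrt 2 * a * V" .
  show "- (1 / V) * ln (p m) \<le> (ln 2 + 2 * sqrt 2 * sqrt (k1/k2) * V - ln (qf ((sqrt (k1/k2))\<^sup>2 * V\<^sup>2) m)) / V"
    unfolding A a_def[symmetric] c_def[symmetric] q_def[symmetric]
    using lS V by (intro divide_right_mono) auto
  have lS2: "ln (q m') \<le> ln S" using Sq[of m'] qp[of m'] by simp
  have "q m * t^m \<le> (1 + t) * exp (2 * sqrt (c * (1 + t)))" unfolding q_def by (rule qf_tilt) (use cp t in auto)
  then have "ln (q m * t^m) \<le> ln ((1 + t) * exp (2 * sqrt (c * (1 + t))))" using qp[of m] t by simp
  moreover have "ln (q m * t^m) = ln (q m) + real m * ln t" using qp[of m] t by (simp add: ln_mult ln_realpow)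
  moreover have "ln ((1 + t) * exp (2 * sqrt (c * (1 + t)))) = ln (1 + t) + 2 * (a * V * sqrt (1 + t))"
    using t unfolding sc2 by (simp add: ln_mult)
  ultimately have lq: "ln (q m) \<le> ln (1 + t) + 2 * a * V * sqrt (1 + t) - real m * ln t" by simp
  show "(ln (qf ((sqrt (k1/k2))\<^sup>2 * V\<^sup>2) m') - ln (1 + t) - 2 * sqrt (k1/k2) * V * sqrt (1 + t) + real m * ln t) / V
         \<le> - (1 / V) * ln (p m)"
    unfolding A a_def[symmetric] c_def[symmetric] q_def[symmetric]
    using lS2 lq V by (intro divide_right_mono) auto
qed

theorem mainTheorem3:
  fixes k1 k2 :: real
    and \<pi> :: "real \<Rightarrow> nat \<Rightarrow> real"
    and Vs :: "nat \<Rightarrow> real"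
    and m :: "nat \<Rightarrow> nat"
    and xt :: real
  assumes k1: "0 < k1" and k2: "0 < k2"
    and stat: "\<And>V. 0 < V \<Longrightarrow> stationary_dist k1 k2 V (\<pi> V)"
    and Vpos: "0 < Vs 0" and Vinc: "strict_mono Vs" and Vlim: "filterlim Vs at_top sequentially"
    and xlim: "(\<lambda>n. real (m n) / Vs n) \<longlonglongrightarrow> xt" and xpos: "0 < xt"
  shows "(\<lambda>n. - (1 / Vs n) * ln (\<pi> (Vs n) (m n))) \<longlonglongrightarrow> gfun k1 k2 xt
    \<and> (\<forall>x>0. gfun k1 k2 differentiable (at x) \<and> deriv (gfun k1 k2) differentiable (at x)
               \<and> deriv (deriv (gfun k1 k2)) x > 0)
    \<and> gfun k1 k2 (sqrt (k1 / (2 * k2))) = 0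
    \<and> (\<forall>x>0. x \<noteq> sqrt (k1 / (2 * k2)) \<longrightarrow> gfun k1 k2 x > 0)
    \<and> (\<forall>x>0. deriv (gfun k1 k2) x * (k1 - 2 * k2 * x\<^sup>2) \<le> 0)
    \<and> (\<forall>x>0. deriv (gfun k1 k2) x * (k1 - 2 * k2 * x\<^sup>2) = 0 \<longleftrightarrow> x = sqrt (k1 / (2 * k2)))"
proof -
  define a where "a = sqrt (k1/k2)"
  have a: "a > 0" using k1 k2 by (simp add: a_def)
  have Vp: "Vs n > 0" for n
  proof -
    have "Vs 0 \<le> Vs n" using Vinc by (simp add: strict_mono_less_eq)
    then show ?thesis using Vpos by simp
  qed
  define xs where "xs = sqrt (k1 / (2 * k2))"
  have xsp: "xs > 0" using k1 k2 by (simp add: xs_def)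
  define m' where "m' n = nat \<lfloor>xs * Vs n\<rfloor>" for n
  have m'l: "(\<lambda>n. real (m' n) / Vs n) \<longlonglongrightarrow> xs" unfolding m'_def
    by (rule floor_ratio) (use xsp Vp Vlim in auto)
  obtain E where ev1: "\<forall>\<^sub>F n in sequentially. E n \<le> ln (qf (a\<^sup>2 * (Vs n)\<^sup>2) (m n))"
      and El: "(\<lambda>n. E n / Vs n) \<longlonglongrightarrow> Fr a xt"
    using LB[OF a Vp Vlim xlim xpos] by blast
  obtain E' where ev1': "\<forall>\<^sub>F n in sequentially. E' n \<le> ln (qf (a\<^sup>2 * (Vs n)\<^sup>2) (m' n))"
      and El': "(\<lambda>n. E' n / Vs n) \<longlonglongrightarrow> Fr a xs"
    using LB[OF a Vp Vlim m'l xsp] by blast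
  define s where "s = sqrt (xt\<^sup>2 + 4 * a\<^sup>2)"
  define w where "w = (s - xt) / 2"
  define t where "t = xt / w"
  have wp: "w > 0" and tid: "2 * a * sqrt (1 + xt / w) = xt + s" and lid: "xt * ln (xt / w) = - (xt * ln (w / xt))"
    using theta_id[OF a xpos] unfolding s_def[symmetric] w_def[symmetric] by auto
  have tp: "t > 0" using wp xpos by (simp add: t_def)
  have iv: "(\<lambda>n. 1 / Vs n) \<longlonglongrightarrow> 0"
    using tendsto_inverse_0_at_top[OF Vlim] by (simp add: divide_inverse)
  have gxs: "Fr a xs = 2 * sqrt 2 * a"
    using gfun_Fr[OF k1 k2 xsp] gfun_star[OF k1 k2] unfolding a_def[symmetric] xs_def[symmetric] by simp
  have gxt: "gfun k1 k2 xt = 2 * sqrt 2 * a - Fr a xt" using gfun_Fr[OF k1 k2 xpos] unfolding a_def .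
  define A where "A n = - (1 / Vs n) * ln (\<pi> (Vs n) (m n))" for n
  define U where "U n = (ln 2 + 2 * sqrt 2 * a * Vs n - E n) / Vs n" for n
  define Lo where "Lo n = (E' n - ln (1 + t) - 2 * a * Vs n * sqrt (1 + t) + real (m n) * ln t) / Vs n" for n
  have AU: "\<forall>\<^sub>F n in sequentially. A n \<le> U n"
    using ev1
  proof (rule eventually_mono)
    fix n assume e: "E n \<le> ln (qf (a\<^sup>2 * (Vs n)\<^sup>2) (m n))"
    have "A n \<le> (ln 2 + 2 * sqrt 2 * a * Vs n - ln (qf (a\<^sup>2 * (Vs n)\<^sup>2) (m n))) / Vs n"
      unfolding A_def a_def using per_V(1)[OF k1 k2 Vp stat[OF Vp] tp] .
    also have "\<dots> \<le> U n" unfolding U_def using e Vp[of n] by (intro divide_right_mono) auto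
    finally show "A n \<le> U n" .
  qed
  have LA: "\<forall>\<^sub>F n in sequentially. Lo n \<le> A n"
    using ev1'
  proof (rule eventually_mono)
    fix n assume e: "E' n \<le> ln (qf (a\<^sup>2 * (Vs n)\<^sup>2) (m' n))"
    have "Lo n \<le> (ln (qf (a\<^sup>2 * (Vs n)\<^sup>2) (m' n)) - ln (1 + t) - 2 * a * Vs n * sqrt (1 + t) + real (m n) * ln t) / Vs n"
      unfolding Lo_def using e Vp[of n] by (intro divide_right_mono) auto
    also have "\<dots> \<le> A n"
      unfolding A_def a_def using per_V(2)[OF k1 k2 Vp stat[OF Vp] tp] .
    finally show "Lo n \<le> A n" .
  qed
  have Ul: "U \<longlonglongrightarrow> gfun k1 k2 xt"
  proof -
    have e: "U n = ln 2 * (1 / Vs n) + 2 * sqrt 2 * a - E n / Vs n" for n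
      using Vp[of n] unfolding U_def by (simp add: field_simps)
    have "(\<lambda>n. ln 2 * (1 / Vs n) + 2 * sqrt 2 * a - E n / Vs n) \<longlonglongrightarrow> ln 2 * 0 + 2 * sqrt 2 * a - Fr a xt"
      by (intro tendsto_intros iv El)
    moreover have "U = (\<lambda>n. ln 2 * (1 / Vs n) + 2 * sqrt 2 * a - E n / Vs n)" by (rule ext) (rule e)
    ultimately show ?thesis unfolding gxt by simp
  qed
  have Ll: "Lo \<longlonglongrightarrow> gfun k1 k2 xt"
  proof -
    have e: "Lo n = E' n / Vs n - ln (1 + t) * (1 / Vs n) - 2 * a * sqrt (1 + t) + (real (m n) / Vs n) * ln t" for n
      using Vp[of n] unfolding Lo_def by (simp add: field_simps)
    have "(\<lambda>n. E' n / Vs n - ln (1 + t) * (1 / Vs n) - 2 * a * sqrt (1 + t) + (real (m n) / Vs n) * ln t)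
        \<longlonglongrightarrow> Fr a xs - ln (1 + t) * 0 - 2 * a * sqrt (1 + t) + xt * ln t"
      by (intro tendsto_intros iv El' xlim)
    moreover have "Fr a xs - ln (1 + t) * 0 - 2 * a * sqrt (1 + t) + xt * ln t = gfun k1 k2 xt"
      unfolding gxt gxs t_def tid lid unfolding Fr_def s_def[symmetric] w_def[symmetric] by simp
    moreover have "Lo = (\<lambda>n. E' n / Vs n - ln (1 + t) * (1 / Vs n) - 2 * a * sqrt (1 + t) + (real (m n) / Vs n) * ln t)"
      by (rule ext) (rule e)
    ultimately show ?thesis by simp
  qed
  have "A \<longlonglongrightarrow> gfun k1 k2 xt" by (rule tendsto_sandwich[OF LA AU Ll Ul])
  then show ?thesis using gfun_partA[OF k1 k2] unfolding A_def by blast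
qed


end
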